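(* Assume the parametrized family $\mathcal F^t$, $t\in\Omega$, satisfies the GTC with respect to a locally finite Borel measure $\eta$ on $\Omega$, with associated $\delta_0$ and $\psi$. Let $s\in(0,d)$ be non-integral, $t_0\in\Omega$ and $0<\delta<\delta_0$. Then there exists $c>0$ (depending on $s$, $\delta$ and $t_0$) such that for all distinct ${\bf i},{\bf j}\in\Sigma$, $$\int_{B(t_0,\delta)}|\Pi^t({\bf i})-\Pi^t({\bf j})|^{-s}\,d\eta(t)\le c\,e^{|{\bf i}\wedge{\bf j}|\psi(\delta)}\Big(\max_{x\in\Sigma}\phi^s\big(D_{\Pi^{t_0}x}f^{t_0}_{{\bf i}\wedge{\bf j}}\big)\Big)^{-1}.$$
   Context: $\Sigma=\{1,\dots,\ell\}^{\mathbb N}$; ${\bf i}\wedge{\bf j}$ the longest common initial word of distinct ${\bf i},{\bf j}$, $|{\bf i}\wedge{\bf j}|$ its length. Singular value function $\phi^s(T)=\alpha_1\cdots\alpha_k\alpha_{k+1}^{s-k}$ for $0\le s<d$, $k=\lfloor s\rfloor$ ($\alpha_1\ge\dots\ge\alpha_d$ singular values), $\phi^s(T)=|\det T|^{s/d}$ for $s\ge d$. Parametrized family: $(\Omega,\rho)$ separable metric space; for each $t$, $\mathcal F^t=\{f^t_i\}_{i=1}^\ell$ is a $C^1$ IFS on a common compact $Z\subset\mathbb R^d$ (maps extending on an open $U\supset Z$ to $C^1$ diffeomorphisms into $U$ with $\sup_U\|Df^t_i\|<1$); common Lipschitz constant $\theta\in(0,1)$ on $Z$ and $t\mapsto f^t_i(x)$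 continuous. $f^t_I=f^t_{i_1}\circ\cdots\circ f^t_{i_n}$, $f^t_\varepsilon=\mathrm{id}$; coding map $\Pi^t({\bf i})=\lim_nf^t_{{\bf i}|n}(z)$. $Z^t_{\bf i}(r)=\inf_{x\in\Sigma}\min_{0\le k\le d}r^k/\phi^k(D_{\Pi^tx}f^t_{\bf i})$. GTC w.r.t. $\eta$: there are $\delta_0>0$ and $\psi:(0,\delta_0)\to[0,\infty)$ with $\psi(\delta)\to0$ such that for every $t_0$ and $0<\delta<\delta_0$ there is $C(t_0,\delta)>0$ with $\eta\{t\in B(t_0,\delta):|\Pi^t({\bf i})-\Pi^t({\bf j})|<r\}\le Ce^{|{\bf i}\wedge{\bf j}|\psi(\delta)}Z^{t_0}_{{\bf i}\wedge{\bf j}}(r)$ for all distinct ${\bf i},{\bf j}$, $r>0$; $B(t_0,\delta)$ the closed ball. *)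

theory Defs
  imports "HOL-Analysis.Analysis" "HOL-Computational_Algebra.Polynomial" "HOL-Library.Multiset"
begin

definition charpoly_mat :: "real^'n^'n \<Rightarrow> real poly" where
  "charpoly_mat A = det (\<chi> i j. (if i = j then [:0, 1:] else 0) - [:A $ i $ j:])"

text \<open>Singular values of A, in non-increasing order: square roots of the eigenvalues
  (with multiplicity) of A^T A.  sv A k is the k-th singular value, k = 1..d.\<close>
definition singular_values :: "real^'n^'n \<Rightarrow> real list" where
  "singular_values A =
     map sqrt (rev (sorted_list_of_multiset (proots (charpoly_mat (transpose A ** A)))))"

definition sv :: "real^'n^'n \<Rightarrow> nat \<Rightarrow> real" where
  "sv A k = singular_values A ! (k - 1)"

definition svf :: "real \<Rightarrow> real^'n^'n \<Rightarrow> real" where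
  "svf s A =
    (if s < real CARD('n) then
       (let k = nat \<lfloor>s\<rfloor> in
          (\<Prod>m\<in>{1..k}. sv A m) * (if s = real k then 1 else sv A (k + 1) powr (s - real k)))
     else \<bar>det A\<bar> powr (s / real CARD('n)))"

text \<open>Sigma = sequences over the finite alphabet 'a (type nat => 'a);
  finite words are lists.\<close>

definition prefix_seq :: "(nat \<Rightarrow> 'a) \<Rightarrow> nat \<Rightarrow> 'a list" where
  "prefix_seq i n = map i [0..<n]"

text \<open>Length |i wedge j| of the longest common initial word of distinct i, j.\<close>
definition common_len :: "(nat \<Rightarrow> 'a) \<Rightarrow> (nat \<Rightarrow> 'a) \<Rightarrow> nat" where
  "common_len i j = (LEAST n. i n \<noteq> j n)"

definition common_word :: "(nat \<Rightarrow> 'a) \<Rightarrow> (nat \<Rightarrow> 'a) \<Rightarrow> 'a list" where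
  "common_word i j = prefix_seq i (common_len i j)"

definition word_map :: "('o \<Rightarrow> 'a \<Rightarrow> 'x \<Rightarrow> 'x) \<Rightarrow> 'o \<Rightarrow> 'a list \<Rightarrow> 'x \<Rightarrow> 'x" where
  "word_map f t I = foldr (\<lambda>a g. f t a \<circ> g) I id"

definition coding :: "('o \<Rightarrow> 'a \<Rightarrow> 'x \<Rightarrow> 'x::metric_space) \<Rightarrow> 'x set \<Rightarrow> 'o \<Rightarrow> (nat \<Rightarrow> 'a) \<Rightarrow> 'x" where
  "coding f Z t i = lim (\<lambda>n. word_map f t (prefix_seq i n) (SOME z. z \<in> Z))"

definition Dmat :: "('o \<Rightarrow> 'a \<Rightarrow> real^'n \<Rightarrow> real^'n) \<Rightarrow> (real^'n) set \<Rightarrow> 'o \<Rightarrow> 'a list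
     \<Rightarrow> (nat \<Rightarrow> 'a) \<Rightarrow> real^'n^'n" where
  "Dmat f Z t I x = matrix (frechet_derivative (word_map f t I) (at (coding f Z t x)))"

definition Zfun :: "('o \<Rightarrow> 'a \<Rightarrow> real^'n \<Rightarrow> real^'n) \<Rightarrow> (real^'n) set \<Rightarrow> 'o \<Rightarrow> 'a list
     \<Rightarrow> real \<Rightarrow> real" where
  "Zfun f Z t I r = (INF x \<in> UNIV. Min ((\<lambda>k. r ^ k / svf (real k) (Dmat f Z t I x)) ` {0..CARD('n)}))"

definition C1_diffeo_into :: "(real^'n) set \<Rightarrow> (real^'n \<Rightarrow> real^'n) \<Rightarrow> bool" where
  "C1_diffeo_into U g \<longleftrightarrow>
     open U \<and> g ` U \<subseteq> U \<and> inj_on g U \<and> open (g ` U) \<and>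
     (\<exists>g'. (\<forall>x\<in>U. (g has_derivative g' x) (at x)) \<and> continuous_on U (\<lambda>x. matrix (g' x))) \<and>
     (\<exists>h h'. (\<forall>x\<in>U. h (g x) = x) \<and>
        (\<forall>y\<in>g ` U. (h has_derivative h' y) (at y)) \<and> continuous_on (g ` U) (\<lambda>y. matrix (h' y)))"

definition param_C1_IFS :: "('o::metric_space \<Rightarrow> 'a::finite \<Rightarrow> real^'n \<Rightarrow> real^'n) \<Rightarrow> (real^'n) set
     \<Rightarrow> (real^'n) set \<Rightarrow> real \<Rightarrow> bool" where
  "param_C1_IFS f Z U \<theta> \<longleftrightarrow>
     separable_space (euclidean :: 'o topology) \<and>
     compact Z \<and> Z \<noteq> {} \<and> open U \<and> Z \<subseteq> U \<and> 0 < \<theta> \<and> \<theta> < 1 \<and>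
     (\<forall>t i. f t i ` Z \<subseteq> Z) \<and>
     (\<forall>t i. C1_diffeo_into U (f t i)) \<and>
     (\<forall>t i. \<exists>q<1. \<forall>x\<in>U. onorm (frechet_derivative (f t i) (at x)) \<le> q) \<and>
     (\<forall>t i. \<forall>x\<in>Z. \<forall>y\<in>Z. dist (f t i x) (f t i y) \<le> \<theta> * dist x y) \<and>
     (\<forall>i. \<forall>x\<in>Z. continuous_on UNIV (\<lambda>t. f t i x))"

definition locally_finite_borel :: "'o::metric_space measure \<Rightarrow> bool" where
  "locally_finite_borel \<eta> \<longleftrightarrow>
     sets \<eta> = sets borel \<and> (\<forall>t. \<exists>V. open V \<and> t \<in> V \<and> emeasure \<eta> V < \<infinity>)"

definition GTC :: "('o::metric_space \<Rightarrow> 'a \<Rightarrow> real^'n \<Rightarrow> real^'n) \<Rightarrow> (real^'n) set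
     \<Rightarrow> 'o measure \<Rightarrow> real \<Rightarrow> (real \<Rightarrow> real) \<Rightarrow> bool" where
  "GTC f Z \<eta> \<delta>0 \<psi> \<longleftrightarrow>
     0 < \<delta>0 \<and> (\<forall>\<delta>\<in>{0<..<\<delta>0}. 0 \<le> \<psi> \<delta>) \<and> (\<psi> \<longlongrightarrow> 0) (at_right 0) \<and>
     (\<forall>t0. \<forall>\<delta>\<in>{0<..<\<delta>0}. \<exists>C>0. \<forall>i j r. i \<noteq> j \<and> 0 < r \<longrightarrow>
        emeasure \<eta> {t \<in> cball t0 \<delta>. dist (coding f Z t i) (coding f Z t j) < r}
          \<le> ennreal (C * exp (real (common_len i j) * \<psi> \<delta>) * Zfun f Z t0 (common_word i j) r))"

definition inv_dist_pow :: "real \<Rightarrow> 'x::metric_space \<Rightarrow> 'x \<Rightarrow> ennreal" where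
  "inv_dist_pow s x y = (if x = y then \<infinity> else ennreal (dist x y powr (- s)))"

end

theory Submission
  imports Defs "HOL-Computational_Algebra.Fundamental_Theorem_Algebra"
begin

lemma map_poly_of_real_add:
  "map_poly (of_real :: real \<Rightarrow> 'a::{real_algebra_1}) (p + q) = map_poly of_real p + map_poly of_real q"
  by (rule poly_eqI) (simp add: coeff_map_poly)

lemma map_poly_of_real_mult:
  "map_poly (of_real :: real \<Rightarrow> 'a::{real_algebra_1,comm_ring_1}) (p * q) = map_poly of_real p * map_poly of_real q"
  by (rule poly_eqI) (simp add: coeff_map_poly coeff_mult of_real_sum)

lemma map_poly_of_real_minus:
  "map_poly (of_real :: real \<Rightarrow> 'a::{real_algebra_1}) (- p) = - map_poly of_real p"
  by (rule poly_eqI) (simp add: coeff_map_poly)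

lemma det_hom:
  fixes h :: "'a::comm_ring_1 \<Rightarrow> 'b::comm_ring_1"
  assumes add: "\<And>x y. h (x + y) = h x + h y" and mult: "\<And>x y. h (x * y) = h x * h y"
    and one: "h 1 = 1" and neg: "\<And>x. h (- x) = - h x"
  shows "h (det A) = det (\<chi> i j. h (A $ i $ j))"
proof -
  have h0: "h 0 = 0" using add[of 0 0] by simp
  have hint: "h (of_int k) = of_int k" for k
  proof (induction k rule: int_induct[where k=0])
    case base then show ?case using h0 by simp
  next
    case (step1 i) then show ?case using add one by simp
  next
    case (step2 i)
    have e: "(of_int (i - 1)::'a) = of_int i + - 1" by simp
    have "h (of_int (i - 1)) = h (of_int i) + - h 1" by (simp only: e add neg)
    then show ?case using one step2 by simp
  qed
  have hprod: "h (prod g S) = prod (h \<circ> g) S" for g and S :: "'n set"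
    by (induct S rule: infinite_finite_induct) (simp_all add: one mult)
  show ?thesis
    unfolding det_def
    by (simp add: sum_comp_morphism[of h, symmetric, OF h0 add] o_def mult hint hprod)
qed

definition cmat :: "real^'n^'n \<Rightarrow> real poly^'n^'n" where
  "cmat M = (\<chi> i j. (if i = j then [:0, 1:] else 0) - [:M $ i $ j:])"

lemma charpoly_cmat: "charpoly_mat M = det (cmat M)"
  unfolding charpoly_mat_def cmat_def ..

lemma degree_cmat: "degree (cmat M $ i $ j) \<le> (if i = j then 1 else 0)"
  unfolding cmat_def by (auto simp: degree_pCons_le)

lemma charpoly_monic:
  fixes M :: "real^'n^'n"
  shows "degree (charpoly_mat M) = CARD('n) \<and> coeff (charpoly_mat M) CARD('n) = 1"
proof -
  let ?U = "UNIV :: 'n set"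
  let ?T = "\<lambda>p. of_int (sign p) * (\<Prod>i\<in>?U. cmat M $ i $ p i)"
  have degT: "degree (?T p) \<le> card {i. p i = i}" for p
  proof -
    have "degree (?T p) \<le> degree (of_int (sign p) :: real poly) + degree (\<Prod>i\<in>?U. cmat M $ i $ p i)"
      by (rule degree_mult_le)
    also have "\<dots> = degree (\<Prod>i\<in>?U. cmat M $ i $ p i)" by simp
    also have "\<dots> \<le> (\<Sum>i\<in>?U. degree (cmat M $ i $ p i))"
      using degree_prod_sum_le[of ?U "\<lambda>i. cmat M $ i $ p i"] by (simp add: o_def)
    also have "\<dots> \<le> (\<Sum>i\<in>?U. (if i = p i then 1 else 0))"
      by (rule sum_mono) (rule degree_cmat)
    also have "\<dots> = card {i. p i = i}"
      by (simp add: sum.If_cases eq_commute[of _ "p _"])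
    finally show ?thesis .
  qed
  have degT2: "degree (?T p) \<le> CARD('n)" for p
    using degT[of p] card_mono[of ?U "{i. p i = i}"] by simp
  have coefT: "coeff (?T p) CARD('n) = 0" if "p \<noteq> id" for p
  proof -
    from that obtain i where "p i \<noteq> i" by (metis eq_id_iff)
    then have "{i. p i = i} \<subset> ?U" by auto
    then have "card {i. p i = i} < CARD('n)" by (simp add: psubset_card_mono)
    then show ?thesis using degT[of p] by (intro coeff_eq_0) simp
  qed
  have Tid: "?T id = (\<Prod>i\<in>?U. [:- M $ i $ i, 1:])"
    by (simp add: cmat_def sign_id)
  have nz: "[:- M $ i $ i, 1:] \<noteq> 0" for i by simp
  have degid: "degree (?T id) = CARD('n)"
    unfolding Tid by (subst degree_prod_sum_eq) (auto)
  have lcid: "coeff (?T id) CARD('n) = 1"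
    using lead_coeff_prod[of "\<lambda>i. [:- M $ i $ i, 1:]" ?U] degid Tid by simp
  have det_eq: "det (cmat M) = (\<Sum>p\<in>{p. p permutes ?U}. ?T p)"
    unfolding det_def ..
  have "coeff (det (cmat M)) CARD('n) = (\<Sum>p\<in>{p. p permutes ?U}. coeff (?T p) CARD('n))"
    unfolding det_eq coeff_sum ..
  also have "\<dots> = coeff (?T id) CARD('n)"
  proof -
    have "id \<in> {p. p permutes ?U}" by (simp add: permutes_id)
    then show ?thesis
      by (subst sum.remove[of _ id]) (auto intro!: sum.neutral simp: coefT)
  qed
  finally have c1: "coeff (det (cmat M)) CARD('n) = 1" using lcid by simp
  have "degree (det (cmat M)) \<le> CARD('n)"
    unfolding det_eq by (rule degree_sum_le) (auto intro: degT2)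
  moreover have "CARD('n) \<le> degree (det (cmat M))" using c1 by (intro le_degree) simp
  ultimately show ?thesis using c1 unfolding charpoly_cmat by simp
qed

lemma root_real_nonneg:
  fixes A :: "real^'n^'n" and z :: complex
  assumes "poly (map_poly of_real (charpoly_mat (transpose A ** A))) z = 0"
  shows "Im z = 0 \<and> 0 \<le> Re z"
proof -
  define M where "M = transpose A ** A"
  define h where "h q = poly (map_poly complex_of_real q) z" for q
  have hdet: "h (det P) = det (\<chi> i j. h (P $ i $ j))" for P :: "real poly^'n^'n"
    by (rule det_hom) (simp_all add: h_def map_poly_of_real_add map_poly_of_real_mult map_poly_of_real_minus)
  define B where "B = (\<chi> i j. h (cmat M $ i $ j))"
  have Bij: "B $ i $ j = (if i = j then z else 0) - of_real (M $ i $ j)" for i j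
    by (simp add: B_def h_def cmat_def map_poly_pCons map_poly_of_real_minus map_poly_of_real_add)
  have "det B = 0" using assms hdet[of "cmat M"] unfolding B_def h_def M_def charpoly_cmat by simp
  then have "\<not> inj ((*v) B)"
    using det_nz_iff_inj_gen[of "(*v) B"] by simp
  then obtain x y where xy: "B *v x = B *v y" "x \<noteq> y" unfolding inj_def by blast
  define v where "v = x - y"
  have v0: "v \<noteq> 0" using xy unfolding v_def by simp
  have Bv: "B *v v = 0" using xy unfolding v_def by (simp add: matrix_vector_mult_diff_distrib)
  have eig: "z * v $ i = (\<Sum>j\<in>UNIV. of_real (M $ i $ j) * v $ j)" for i
  proof -
    have "0 = (B *v v) $ i" using Bv by simp
    also have "\<dots> = (\<Sum>j\<in>UNIV. ((if i = j then z else 0) - of_real (M $ i $ j)) * v $ j)"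
      by (simp add: matrix_vector_mult_def Bij)
    also have "\<dots> = z * v $ i - (\<Sum>j\<in>UNIV. of_real (M $ i $ j) * v $ j)"
    proof -
      have "(\<Sum>j\<in>UNIV. (if i = j then z else 0) * v $ j) = (\<Sum>j\<in>UNIV. if i = j then z * v $ j else 0)"
        by (rule sum.cong) auto
      also have "\<dots> = z * v $ i" by (simp add: sum.delta)
      finally show ?thesis by (simp add: left_diff_distrib sum_subtractf)
    qed
    finally show ?thesis by simp
  qed
  have Mij: "M $ i $ j = (\<Sum>l\<in>UNIV. A $ l $ i * A $ l $ j)" for i j
    by (simp add: M_def matrix_matrix_mult_def transpose_def)
  define w where "w l = (\<Sum>j\<in>UNIV. of_real (A $ l $ j) * v $ j)" for l
  have "z * (\<Sum>i\<in>UNIV. cnj (v $ i) * v $ i) = (\<Sum>i\<in>UNIV. cnj (v $ i) * (z * v $ i))"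
    by (simp add: sum_distrib_left mult_ac)
  also have "\<dots> = (\<Sum>i\<in>UNIV. cnj (v $ i) * (\<Sum>j\<in>UNIV. of_real (M $ i $ j) * v $ j))"
    by (simp only: eig)
  also have "\<dots> = (\<Sum>i\<in>UNIV. \<Sum>j\<in>UNIV. \<Sum>l\<in>UNIV. cnj (v $ i) * of_real (A $ l $ i) * (of_real (A $ l $ j) * v $ j))"
  proof (rule sum.cong[OF refl])
    fix i
    show "cnj (v $ i) * (\<Sum>j\<in>UNIV. of_real (M $ i $ j) * v $ j) = (\<Sum>j\<in>UNIV. \<Sum>l\<in>UNIV. cnj (v $ i) * of_real (A $ l $ i) * (of_real (A $ l $ j) * v $ j))"
      unfolding sum_distrib_left
    proof (rule sum.cong[OF refl])
      fix j
      show "cnj (v $ i) * (of_real (M $ i $ j) * v $ j) = (\<Sum>l\<in>UNIV. cnj (v $ i) * of_real (A $ l $ i) * (of_real (A $ l $ j) * v $ j))"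
        unfolding Mij of_real_sum sum_distrib_left sum_distrib_right
        by (rule sum.cong[OF refl]) (simp add: mult_ac)
    qed
  qed
  also have "\<dots> = (\<Sum>i\<in>UNIV. \<Sum>l\<in>UNIV. \<Sum>j\<in>UNIV. cnj (v $ i) * of_real (A $ l $ i) * (of_real (A $ l $ j) * v $ j))"
    by (rule sum.cong[OF refl], rule sum.swap)
  also have "\<dots> = (\<Sum>l\<in>UNIV. \<Sum>i\<in>UNIV. \<Sum>j\<in>UNIV. cnj (v $ i) * of_real (A $ l $ i) * (of_real (A $ l $ j) * v $ j))"
    by (rule sum.swap)
  also have "\<dots> = (\<Sum>l\<in>UNIV. (\<Sum>i\<in>UNIV. cnj (v $ i) * of_real (A $ l $ i)) * w l)"
    unfolding w_def by (simp add: sum_product)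
  also have "\<dots> = (\<Sum>l\<in>UNIV. cnj (w l) * w l)"
    unfolding w_def by (simp add: mult.commute)
  finally have eq: "z * (\<Sum>i\<in>UNIV. cnj (v $ i) * v $ i) = (\<Sum>l\<in>UNIV. cnj (w l) * w l)" .
  have cm: "cnj u * u = of_real (cmod u ^ 2)" for u :: complex
    using complex_norm_square[of u] by (simp add: mult.commute)
  define N where "N = (\<Sum>i\<in>UNIV. cmod (v $ i) ^ 2)"
  define R where "R = (\<Sum>l\<in>UNIV. cmod (w l) ^ 2)"
  have "z * of_real N = of_real R" using eq by (simp add: cm N_def R_def)
  moreover have "N > 0"
  proof -
    from v0 obtain i where "v $ i \<noteq> 0" by (metis vec_eq_iff zero_index)
    then have "cmod (v $ i) ^ 2 > 0" by simp
    then show ?thesis unfolding N_def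
      by (intro sum_pos2[where i=i]) auto
  qed
  moreover have "R \<ge> 0" unfolding R_def by (intro sum_nonneg) simp
  ultimately have "z = of_real (R / N)" by (simp add: field_simps)
  then show ?thesis using \<open>R \<ge> 0\<close> \<open>N > 0\<close> by simp
qed

lemma map_poly_of_real_prod_mset:
  "map_poly (of_real :: real \<Rightarrow> complex) (\<Prod>a\<in>#R. [:-a, 1:]) = (\<Prod>a\<in>#R. [:- of_real a, 1:])"
proof (induction R)
  case empty then show ?case by simp
next
  case (add x R)
  have lin: "map_poly (of_real :: real \<Rightarrow> complex) [:-x, 1:] = [:- of_real x, 1:]"
    by (simp add: map_poly_pCons)
  have "map_poly (of_real :: real \<Rightarrow> complex) (\<Prod>a\<in>#add_mset x R. [:-a, 1:])
     = map_poly of_real ([:-x, 1:] * (\<Prod>a\<in>#R. [:-a, 1:]))" by simp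
  also have "\<dots> = map_poly of_real [:-x, 1:] * map_poly of_real (\<Prod>a\<in>#R. [:-a, 1:])"
    by (rule map_poly_of_real_mult)
  also have "\<dots> = [:- of_real x, 1:] * (\<Prod>a\<in>#R. [:- of_real a, 1:])" by (simp only: lin add.IH)
  finally show ?case by simp
qed

lemma proots_prod_linear: "proots (\<Prod>a\<in>#R. [:-a, 1:] :: real poly) = R"
proof (induction R)
  case empty then show ?case by simp
next
  case (add x R)
  have nz: "0 \<notin># image_mset (\<lambda>a. [:-a, 1:] :: real poly) R" by auto
  have "(\<Prod>a\<in>#R. [:-a, 1:] :: real poly) \<noteq> 0" using nz prod_mset_zero_iff by blast
  then have "proots ([:-x, 1:] * (\<Prod>a\<in>#R. [:-a, 1:])) = proots [:-x, 1:] + proots (\<Prod>a\<in>#R. [:-a, 1:] :: real poly)"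
    by (intro proots_mult) auto
  also have "proots [:-x, 1:] = {#x#}" using proots_linear_factor[of "-x"] by simp
  finally show ?case using add by simp
qed

lemma prod_mset_neg: "(\<Prod>a\<in>#R. - (a::real)) = (-1) ^ size R * prod_mset R"
  by (induction R) simp_all

lemma charpoly_split:
  fixes A :: "real^'n^'n"
  defines "p \<equiv> charpoly_mat (transpose A ** A)"
  shows "size (proots p) = CARD('n) \<and> (\<forall>a\<in>#proots p. 0 \<le> a) \<and> prod_mset (proots p) = det A ^ 2"
proof -
  define q where "q = map_poly (of_real :: real \<Rightarrow> complex) p"
  have dp: "degree p = CARD('n)" and cp: "coeff p CARD('n) = 1"
    using charpoly_monic[of "transpose A ** A"] unfolding p_def by auto
  have dq: "degree q = CARD('n)" unfolding q_def using dp by (subst degree_map_poly) auto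
  have lq: "lead_coeff q = 1" using dq cp unfolding q_def by (simp add: coeff_map_poly)
  have q0: "q \<noteq> 0" using lq by auto
  have dec: "q = (\<Prod>x\<in>#proots q. [:-x, 1:])"
    using complex_poly_decompose_multiset[of q] lq by simp
  have rts: "Im x = 0 \<and> 0 \<le> Re x" if "x \<in># proots q" for x
  proof -
    have "poly q x = 0" using that q0 by simp
    then show ?thesis using root_real_nonneg[of A x] unfolding q_def p_def by simp
  qed
  define R where "R = image_mset Re (proots q)"
  have imR: "image_mset of_real R = proots q"
  proof -
    have "image_mset of_real R = image_mset (\<lambda>x. of_real (Re x)) (proots q)"
      unfolding R_def by (simp add: multiset.map_comp o_def)
    also have "\<dots> = image_mset (\<lambda>x. x) (proots q)"
      by (rule image_mset_cong) (use rts complex_eqI in auto)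
    finally show ?thesis by simp
  qed
  have "map_poly of_real (\<Prod>a\<in>#R. [:-a, 1:]) = q"
    unfolding map_poly_of_real_prod_mset
    by (subst dec) (simp add: imR[symmetric] multiset.map_comp o_def)
  then have "map_poly (of_real :: real \<Rightarrow> complex) (\<Prod>a\<in>#R. [:-a, 1:]) = map_poly of_real p"
    unfolding q_def .
  then have peq: "p = (\<Prod>a\<in>#R. [:-a, 1:])"
    by (intro poly_eqI) (metis (no_types) coeff_map_poly of_real_0 of_real_eq_iff)
  have prR: "proots p = R" unfolding peq by (rule proots_prod_linear)
  have szR: "size R = CARD('n)"
    using size_proots_complex[of q] dq imR by (metis size_image_mset)
  have nnR: "\<forall>a\<in>#R. 0 \<le> a" using rts unfolding R_def by auto
  have "poly p 0 = (\<Prod>a\<in>#R. - a)" unfolding peq by (simp add: poly_prod_mset)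
  also have "\<dots> = (-1) ^ CARD('n) * prod_mset R" using szR by (simp add: prod_mset_neg)
  finally have p01: "poly p 0 = (-1) ^ CARD('n) * prod_mset R" .
  define h where "h q = poly q (0::real)" for q
  have "h (det (cmat (transpose A ** A))) = det (\<chi> i j. h (cmat (transpose A ** A) $ i $ j))"
    by (rule det_hom) (simp_all add: h_def)
  also have "(\<chi> i j. h (cmat (transpose A ** A) $ i $ j)) = (\<chi> i. (-1) *s (transpose A ** A) $ i)"
    by (simp add: h_def cmat_def vec_eq_iff)
  also have "det \<dots> = (-1) ^ CARD('n) * det (transpose A ** A)"
    using det_rows_mul[of "\<lambda>_. -1" "\<lambda>i. (transpose A ** A) $ i"] by simp
  also have "\<dots> = (-1) ^ CARD('n) * det A ^ 2" by (simp add: det_mul power2_eq_square)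
  finally have p02: "poly p 0 = (-1) ^ CARD('n) * det A ^ 2"
    unfolding h_def p_def charpoly_cmat .
  from p01 p02 have "prod_mset R = det A ^ 2" by simp
  then show ?thesis using prR szR nnR by simp
qed

lemma prod_nth_shift: "(\<Prod>m\<in>{1..length xs}. (xs ! (m - 1) :: real)) = prod_list xs"
proof (induction xs rule: rev_induct)
  case Nil then show ?case by simp
next
  case (snoc x xs)
  have "(\<Prod>m\<in>{1..length (xs @ [x])}. (xs @ [x]) ! (m - 1)) =
        (\<Prod>m\<in>{1..length xs}. (xs @ [x]) ! (m - 1)) * (xs @ [x]) ! length xs"
    by (simp add: prod.cl_ivl_Suc)
  also have "(\<Prod>m\<in>{1..length xs}. (xs @ [x]) ! (m - 1)) = (\<Prod>m\<in>{1..length xs}. xs ! (m - 1))"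
    by (rule prod.cong) (auto simp: nth_append)
  finally show ?case using snoc by simp
qed

lemma prod_list_sqrt: "prod_list (map sqrt xs) = sqrt (prod_list xs)"
  by (induction xs) (simp_all add: real_sqrt_mult)

lemma sv_facts:
  fixes A :: "real^'n^'n"
  shows "\<And>m. m \<in> {1..CARD('n)} \<Longrightarrow> 0 \<le> sv A m"
    and "(\<Prod>m\<in>{1..CARD('n)}. sv A m) = \<bar>det A\<bar>"
proof -
  define R where "R = proots (charpoly_mat (transpose A ** A))"
  define L where "L = rev (sorted_list_of_multiset R)"
  have RR: "size R = CARD('n)" "\<forall>a\<in>#R. 0 \<le> a" "prod_mset R = det A ^ 2"
    using charpoly_split[of A] unfolding R_def by auto
  have mL: "mset L = R" unfolding L_def by simp
  have lL: "length L = CARD('n)" using RR(1) mL by (metis size_mset)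
  have svL: "sv A m = sqrt (L ! (m - 1))" if "m \<in> {1..CARD('n)}" for m
  proof -
    have "m - 1 < length L" using that lL by auto
    then show ?thesis unfolding sv_def singular_values_def L_def[symmetric] R_def[symmetric] by simp
  qed
  show "0 \<le> sv A m" if "m \<in> {1..CARD('n)}" for m
  proof -
    have "L ! (m - 1) \<in> set L" using that lL by auto
    then have "L ! (m - 1) \<in># R" using mL by (metis set_mset_mset)
    then show ?thesis using RR(2) svL[OF that] by simp
  qed
  have "(\<Prod>m\<in>{1..CARD('n)}. sv A m) = (\<Prod>m\<in>{1..length (map sqrt L)}. map sqrt L ! (m - 1))"
    by (rule prod.cong) (auto simp: lL svL)
  also have "\<dots> = prod_list (map sqrt L)" by (rule prod_nth_shift)
  also have "\<dots> = sqrt (prod_mset R)" by (simp add: prod_list_sqrt mL[symmetric] prod_mset_prod_list)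
  also have "\<dots> = \<bar>det A\<bar>" using RR(3) by simp
  finally show "(\<Prod>m\<in>{1..CARD('n)}. sv A m) = \<bar>det A\<bar>" .
qed

lemma sv_nonneg: "1 \<le> m \<Longrightarrow> m \<le> CARD('n) \<Longrightarrow> 0 \<le> sv (A::real^'n^'n) m"
  by (rule sv_facts(1)) simp

lemma svf_int_lt:
  fixes A :: "real^'n^'n"
  assumes "m < CARD('n)"
  shows "svf (real m) A = (\<Prod>i\<in>{1..m}. sv A i)"
  using assms unfolding svf_def by (simp add: Let_def)

lemma svf_int_d:
  fixes A :: "real^'n^'n"
  shows "svf (real CARD('n)) A = (\<Prod>i\<in>{1..CARD('n)}. sv A i)"
  unfolding svf_def sv_facts(2) by simp

lemma svf_int_nonneg:
  fixes A :: "real^'n^'n"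
  assumes "m \<le> CARD('n)"
  shows "0 \<le> svf (real m) A"
proof (cases "m < CARD('n)")
  case True
  then show ?thesis unfolding svf_int_lt[OF True] by (intro prod_nonneg) (use True in \<open>auto intro!: sv_nonneg\<close>)
next
  case False
  then have "m = CARD('n)" using assms by simp
  then show ?thesis unfolding svf_def by simp
qed

lemma svf_int_succ:
  fixes A :: "real^'n^'n"
  assumes "k < CARD('n)"
  shows "svf (real (k + 1)) A = (\<Prod>i\<in>{1..k}. sv A i) * sv A (k + 1)"
proof (cases "k + 1 < CARD('n)")
  case True
  then show ?thesis unfolding svf_int_lt[OF True] by (simp add: prod.cl_ivl_Suc)
next
  case False
  then have e: "k + 1 = CARD('n)" using assms by simp
  show ?thesis using svf_int_d[of A] unfolding e[symmetric] by (simp add: prod.cl_ivl_Suc)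
qed

lemma svf_frac:
  fixes A :: "real^'n^'n"
  assumes "0 < s" "s < real CARD('n)" "s \<notin> \<int>"
  defines "k \<equiv> nat \<lfloor>s\<rfloor>"
  shows "svf s A = (\<Prod>i\<in>{1..k}. sv A i) * sv A (k + 1) powr (s - real k)"
    and "real k < s" "s < real k + 1" "k < CARD('n)"
proof -
  have fl: "real k = of_int \<lfloor>s\<rfloor>" unfolding k_def using assms(1) by simp
  have ne: "s \<noteq> real k" using assms(3) fl by (metis Ints_of_int)
  show "svf s A = (\<Prod>i\<in>{1..k}. sv A i) * sv A (k + 1) powr (s - real k)"
    using assms(2) ne unfolding svf_def k_def[symmetric] by (simp add: Let_def)
  show "real k < s" using ne fl by (metis floor_le_iff less_eq_real_def of_int_floor_le)
  show "s < real k + 1" using fl by linarith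
  then show "k < CARD('n)" using \<open>real k < s\<close> assms(2) by linarith
qed

lemma svf_frac_nonneg:
  fixes A :: "real^'n^'n"
  assumes "0 < s" "s < real CARD('n)" "s \<notin> \<int>"
  shows "0 \<le> svf s A"
proof -
  note F1 = svf_frac(1)[OF assms, of A] and F4 = svf_frac(4)[OF assms]
  show ?thesis unfolding F1
    by (intro mult_nonneg_nonneg prod_nonneg) (use F4 in \<open>auto intro!: sv_nonneg\<close>)
qed

lemma Zfun_le:
  fixes f :: "'o \<Rightarrow> 'a \<Rightarrow> real^'n \<Rightarrow> real^'n"
  assumes "m \<le> CARD('n)" "0 < r"
  shows "Zfun f Z t I r \<le> r ^ m / svf (real m) (Dmat f Z t I x)"
proof -
  let ?g = "\<lambda>x. Min ((\<lambda>k. r ^ k / svf (real k) (Dmat f Z t I x)) ` {0..CARD('n)})"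
  have nn: "0 \<le> ?g y" for y
    using assms(2) by (subst Min_ge_iff) (auto intro!: divide_nonneg_nonneg svf_int_nonneg)
  have "Zfun f Z t I r \<le> ?g x"
  proof -
    have "bdd_below (range ?g)" by (rule bdd_belowI2[where m=0]) (rule nn)
    then show ?thesis unfolding Zfun_def by (rule cINF_lower) simp
  qed
  also have "?g x \<le> r ^ m / svf (real m) (Dmat f Z t I x)"
    by (rule Min_le) (use assms in auto)
  finally show ?thesis .
qed

lemma pow_exp: assumes "0 < (x::real)" shows "x ^ n = exp (real n * ln x)"
  using exp_of_nat_mult[of n "ln x"] exp_ln[OF assms] by simp

lemma powr_exp: "0 < (x::real) \<Longrightarrow> x powr a = exp (a * ln x)"
  by (auto simp: powr_def)

lemma term1:
  fixes \<sigma> s E P :: real and j k :: nat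
  assumes "0 < \<sigma>"
  shows "\<sigma> powr (-s) * 2 powr (-s * real j) * (E * (\<sigma> * 2 ^ (j + 1)) ^ k / P)
       = (E * 2 ^ k * \<sigma> powr (real k - s) / P) * (2 powr (real k - s)) ^ j"
proof -
  have r1: "\<sigma> powr (-s) = exp (-s * ln \<sigma>)" using assms by (simp add: powr_exp)
  have r2: "(2::real) powr (-s * real j) = exp (-s * real j * ln 2)" by (simp add: powr_exp)
  have r3: "(\<sigma> * 2 ^ (j + 1)) ^ k = exp (real k * (ln \<sigma> + real (j+1) * ln 2))"
  proof -
    have "0 < \<sigma> * 2 ^ (j + 1)" using assms by simp
    moreover have "ln (\<sigma> * 2 ^ (j + 1)) = ln \<sigma> + real (j+1) * ln 2"
      using assms by (simp add: ln_mult ln_realpow del: power_Suc)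
    ultimately show ?thesis by (simp add: pow_exp del: power_Suc)
  qed
  have r4: "(2::real) ^ k = exp (real k * ln 2)" by (simp add: pow_exp)
  have r5: "\<sigma> powr (real k - s) = exp ((real k - s) * ln \<sigma>)" using assms by (simp add: powr_exp)
  have r6: "(2 powr (real k - s)) ^ j = exp (real j * ((real k - s) * ln 2))"
    by (simp add: pow_exp powr_exp)
  have "\<sigma> powr (-s) * 2 powr (-s * real j) * (E * (\<sigma> * 2 ^ (j + 1)) ^ k / P)
      = E / P * (exp (-s * ln \<sigma>) * exp (-s * real j * ln 2) * exp (real k * (ln \<sigma> + real (j+1) * ln 2)))"
    unfolding r1 r2 r3 by simp
  also have "\<dots> = E / P * exp (-s * ln \<sigma> + -s * real j * ln 2 + real k * (ln \<sigma> + real (j+1) * ln 2))"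
    by (simp only: exp_add)
  also have "\<dots> = E / P * exp (real k * ln 2 + (real k - s) * ln \<sigma> + real j * ((real k - s) * ln 2))"
    by (intro arg_cong[where f="\<lambda>x. E / P * exp x"]) (simp add: algebra_simps)
  also have "\<dots> = (E * 2 ^ k * \<sigma> powr (real k - s) / P) * (2 powr (real k - s)) ^ j"
    unfolding r4 r5 r6 by (simp add: exp_add)
  finally show ?thesis .
qed

lemma term2:
  fixes \<sigma> s E P :: real and j k :: nat
  assumes "0 < \<sigma>"
  shows "\<sigma> powr (-s) * 2 powr (s * (real j + 1)) * (E * (\<sigma> * 2 / 2 ^ j) ^ (k + 1) / (P * \<sigma>))
       = (E * 2 ^ (k + 1) * 2 powr s * \<sigma> powr (real k - s) / P) * (2 powr (s - real k - 1)) ^ j"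
proof -
  have r1: "\<sigma> powr (-s) = exp (-s * ln \<sigma>)" using assms by (simp add: powr_exp)
  have r2: "(2::real) powr (s * (real j + 1)) = exp (s * (real j + 1) * ln 2)" by (simp add: powr_exp)
  have r3: "(\<sigma> * 2 / 2 ^ j) ^ (k + 1) = exp (real (k + 1) * (ln \<sigma> + ln 2 - real j * ln 2))"
  proof -
    have pos: "0 < \<sigma> * 2 / 2 ^ j" using assms by simp
    have "ln (\<sigma> * 2 / 2 ^ j) = ln \<sigma> + ln 2 - real j * ln 2"
      using assms by (simp add: ln_mult ln_realpow ln_div)
    then show ?thesis using pow_exp[OF pos, of "k+1"] by simp
  qed
  have r0: "\<sigma> = exp (ln \<sigma>)" using assms by simp
  have r4: "(2::real) ^ (k + 1) = exp (real (k + 1) * ln 2)" by (rule pow_exp) simp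
  have r7: "(2::real) powr s = exp (s * ln 2)" by (simp add: powr_exp)
  have r5: "\<sigma> powr (real k - s) = exp ((real k - s) * ln \<sigma>)" using assms by (simp add: powr_exp)
  have r6: "(2 powr (s - real k - 1)) ^ j = exp (real j * ((s - real k - 1) * ln 2))"
    by (simp add: pow_exp powr_exp)
  have "\<sigma> powr (-s) * 2 powr (s * (real j + 1)) * (E * (\<sigma> * 2 / 2 ^ j) ^ (k + 1) / (P * \<sigma>))
      = E / P * (exp (-s * ln \<sigma>) * exp (s * (real j + 1) * ln 2) * exp (real (k + 1) * (ln \<sigma> + ln 2 - real j * ln 2)) / exp (ln \<sigma>))"
    unfolding r1 r2 r3 by (subst (3) r0) simp
  also have "\<dots> = E / P * exp (-s * ln \<sigma> + s * (real j + 1) * ln 2 + real (k + 1) * (ln \<sigma> + ln 2 - real j * ln 2) - ln \<sigma>)"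
    by (simp only: exp_add exp_diff)
  also have "\<dots> = E / P * exp (real (k + 1) * ln 2 + s * ln 2 + (real k - s) * ln \<sigma> + real j * ((s - real k - 1) * ln 2))"
    by (intro arg_cong[where f="\<lambda>x. E / P * exp x"]) (simp add: algebra_simps)
  also have "\<dots> = (E * 2 ^ (k + 1) * 2 powr s * \<sigma> powr (real k - s) / P) * (2 powr (s - real k - 1)) ^ j"
    unfolding r4 r5 r6 r7 by (simp add: exp_add)
  finally show ?thesis .
qed

definition Kc :: "real \<Rightarrow> nat \<Rightarrow> real" where
  "Kc s k = 2 ^ k / (1 - 2 powr (real k - s)) + 2 ^ (k + 1) * 2 powr s / (1 - 2 powr (s - real k - 1))"

lemma dyadic:
  assumes "1 \<le> (x::real)"
  shows "\<exists>j::nat. 2 ^ j \<le> x \<and> x < 2 ^ (j + 1)"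
proof -
  obtain n where n: "x < 2 ^ n" using real_arch_pow[of 2 x] by auto
  define m where "m = (LEAST n. x < (2::real) ^ n)"
  have m1: "x < 2 ^ m" unfolding m_def by (rule LeastI[of _ n]) (rule n)
  have m0: "m \<noteq> 0" using m1 assms by (intro notI) simp
  then obtain j where j: "m = Suc j" by (cases m) auto
  have "\<not> x < 2 ^ j" using not_less_Least[of j "\<lambda>n. x < (2::real) ^ n"] j unfolding m_def by simp
  then show ?thesis using m1 j by (intro exI[of _ j]) simp
qed

lemma ennreal_le_suminf: "f j \<le> (\<Sum>i. f i :: ennreal)"
  by (metis ennreal_suminf_lessD not_le order_less_irrefl)

lemma suminf_geom_ennreal:
  assumes "0 \<le> c" "0 \<le> q" "q < 1"
  shows "(\<Sum>j. ennreal (c * q ^ j)) = ennreal (c / (1 - q))"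
proof -
  have sg: "summable (\<lambda>j. q ^ j)" using assms by (intro summable_geometric) simp
  have "(\<Sum>j. ennreal (c * q ^ j)) = ennreal (\<Sum>j. c * q ^ j)"
    using assms sg by (intro suminf_ennreal2 summable_mult) auto
  also have "(\<Sum>j. c * q ^ j) = c * (\<Sum>j. q ^ j)" using sg by (rule suminf_mult)
  also have "(\<Sum>j. q ^ j) = 1 / (1 - q)" using assms by (intro suminf_geometric) simp
  finally show ?thesis by simp
qed

lemma core:
  fixes \<eta> :: "'o measure" and D :: "'o \<Rightarrow> real" and B :: "'o set"
  assumes Dnn: "\<And>t. 0 \<le> D t"
    and meas: "\<And>r. 0 < r \<Longrightarrow> {t \<in> B. D t < r} \<in> sets \<eta>"
    and b1: "\<And>r. 0 < r \<Longrightarrow> emeasure \<eta> {t \<in> B. D t < r} \<le> ennreal (E * r ^ k / P)"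
    and b2: "\<And>r. 0 < r \<Longrightarrow> emeasure \<eta> {t \<in> B. D t < r} \<le> ennreal (E * r ^ (k + 1) / (P * \<sigma>))"
    and E: "0 \<le> E" and P: "0 < P" and sig: "0 < \<sigma>" and ks: "real k < s" "s < real k + 1"
  shows "(\<integral>\<^sup>+ t \<in> B. (if D t = 0 then \<infinity> else ennreal (D t powr (-s))) \<partial>\<eta>)
           \<le> ennreal (Kc s k * E / (P * \<sigma> powr (s - real k)))"
proof -
  define a where "a j = \<sigma> powr (-s) * 2 powr (-s * real j)" for j :: nat
  define b where "b j = \<sigma> powr (-s) * 2 powr (s * (real j + 1))" for j :: nat
  define U where "U j = {t \<in> B. D t < \<sigma> * 2 ^ (j + 1)}" for j :: nat
  define V where "V j = {t \<in> B. D t < \<sigma> * 2 / 2 ^ j}" for j :: nat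
  have s0: "0 < s" using ks by linarith
  have Um: "U j \<in> sets \<eta>" for j unfolding U_def using sig by (intro meas) simp
  have Vm: "V j \<in> sets \<eta>" for j unfolding V_def using sig by (intro meas) simp
  have a0: "0 \<le> a j" for j unfolding a_def by simp
  have b0: "0 \<le> b j" for j unfolding b_def by simp
  have aeq: "(\<sigma> * 2 ^ j) powr (-s) = a j" for j
    unfolding a_def using sig by (simp add: powr_mult powr_realpow[symmetric] powr_powr mult.commute)
  have beq: "(\<sigma> / 2 ^ (j + 1)) powr (-s) = b j" for j
  proof -
    have e: "(2::real) ^ (j + 1) = 2 powr (real j + 1)"
      by (subst powr_realpow[symmetric]) (simp_all add: add.commute)
    have "(\<sigma> / 2 ^ (j + 1)) powr (-s) = (\<sigma> / 2 powr (real j + 1)) powr (-s)" by (simp only: e)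
    also have "\<dots> = \<sigma> powr (-s) / (2 powr (real j + 1)) powr (-s)"
      using sig by (simp add: powr_divide)
    also have "\<dots> = \<sigma> powr (-s) * 2 powr (s * (real j + 1))"
      by (simp add: powr_powr powr_minus divide_inverse mult.commute)
    finally show ?thesis unfolding b_def .
  qed
  have binf: "(\<Sum>j. ennreal (b j)) = \<infinity>"
  proof (rule ccontr)
    assume "(\<Sum>j. ennreal (b j)) \<noteq> \<infinity>"
    then have "summable b" using b0 by (intro summable_suminf_not_top) auto
    then have "b \<longlonglongrightarrow> 0" by (rule summable_LIMSEQ_zero)
    moreover have "\<sigma> powr (-s) \<le> b j" for j
    proof -
      have "1 \<le> (2::real) powr (s * (real j + 1))" by (rule ge_one_powr_ge_zero) (use s0 in auto)
      then have "\<sigma> powr (-s) * 1 \<le> \<sigma> powr (-s) * 2 powr (s * (real j + 1))"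
        by (intro mult_left_mono) auto
      then show ?thesis unfolding b_def by simp
    qed
    ultimately have "\<sigma> powr (-s) \<le> 0" by (intro LIMSEQ_le_const[of b 0]) auto
    then show False using sig by simp
  qed
  have pw: "(if D t = 0 then \<infinity> else ennreal (D t powr (-s))) * indicator B t
      \<le> (\<Sum>j. ennreal (a j) * indicator (U j) t) + (\<Sum>j. ennreal (b j) * indicator (V j) t)" for t
  proof (cases "t \<in> B")
    case False then show ?thesis by simp
  next
    case tB: True
    show ?thesis
    proof (cases "D t = 0")
      case True
      then have "t \<in> V j" for j using tB sig unfolding V_def by simp
      then have "(\<Sum>j. ennreal (b j) * indicator (V j) t) = \<infinity>" using binf by simp
      then show ?thesis by simp
    next
      case Dne: False
      then have Dp: "0 < D t" using Dnn[of t] by simp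
      show ?thesis
      proof (cases "\<sigma> \<le> D t")
        case True
        then obtain j :: nat where j: "2 ^ j \<le> D t / \<sigma>" "D t / \<sigma> < 2 ^ (j + 1)"
          using dyadic[of "D t / \<sigma>"] sig by auto
        have j1: "\<sigma> * 2 ^ j \<le> D t" using j(1) sig by (simp add: field_simps)
        have j2: "D t < \<sigma> * 2 ^ (j + 1)" using j(2) sig by (simp add: field_simps)
        have "D t powr (-s) \<le> (\<sigma> * 2 ^ j) powr (-s)"
          using j1 sig s0 by (intro powr_mono2') auto
        then have "ennreal (D t powr (-s)) \<le> ennreal (a j) * indicator (U j) t"
          using j2 tB unfolding aeq U_def by (simp add: ennreal_leI)
        also have "\<dots> \<le> (\<Sum>j. ennreal (a j) * indicator (U j) t)" by (rule ennreal_le_suminf)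
        finally show ?thesis using tB Dne by (simp add: add_increasing2)
      next
        case False
        then obtain j :: nat where j: "2 ^ j \<le> \<sigma> / D t" "\<sigma> / D t < 2 ^ (j + 1)"
          using dyadic[of "\<sigma> / D t"] Dp by auto
        have j1: "D t \<le> \<sigma> / 2 ^ j" using j(1) Dp by (simp add: field_simps)
        have j2: "\<sigma> / 2 ^ (j + 1) < D t" using j(2) Dp by (simp add: field_simps)
        have "\<sigma> / 2 ^ j < \<sigma> * 2 / 2 ^ j" using sig by (simp add: divide_strict_right_mono)
        then have j3: "D t < \<sigma> * 2 / 2 ^ j" using j1 by linarith
        have "D t powr (-s) \<le> (\<sigma> / 2 ^ (j + 1)) powr (-s)"
          using j2 sig s0 by (intro powr_mono2') auto
        then have "ennreal (D t powr (-s)) \<le> ennreal (b j) * indicator (V j) t"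
          using j3 tB unfolding beq V_def by (simp add: ennreal_leI)
        also have "\<dots> \<le> (\<Sum>j. ennreal (b j) * indicator (V j) t)" by (rule ennreal_le_suminf)
        finally show ?thesis using tB Dne by (simp add: add_increasing)
      qed
    qed
  qed
  define q1 where "q1 = (2::real) powr (real k - s)"
  define q2 where "q2 = (2::real) powr (s - real k - 1)"
  define c1 where "c1 = E * 2 ^ k * \<sigma> powr (real k - s) / P"
  define c2 where "c2 = E * 2 ^ (k + 1) * 2 powr s * \<sigma> powr (real k - s) / P"
  have q1: "0 \<le> q1" "q1 < 1" unfolding q1_def using ks by (auto intro!: powr_less_one)
  have q2: "0 \<le> q2" "q2 < 1" unfolding q2_def using ks by (auto intro!: powr_less_one)
  have c1: "0 \<le> c1" unfolding c1_def using E P by simp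
  have c2: "0 \<le> c2" unfolding c2_def using E P by simp
  have mU: "(\<lambda>t. ennreal (a j) * indicator (U j) t) \<in> borel_measurable \<eta>" for j
    using Um by measurable
  have mV: "(\<lambda>t. ennreal (b j) * indicator (V j) t) \<in> borel_measurable \<eta>" for j
    using Vm by measurable
  have "(\<integral>\<^sup>+ t \<in> B. (if D t = 0 then \<infinity> else ennreal (D t powr (-s))) \<partial>\<eta>)
      \<le> (\<integral>\<^sup>+ t. (\<Sum>j. ennreal (a j) * indicator (U j) t) + (\<Sum>j. ennreal (b j) * indicator (V j) t) \<partial>\<eta>)"
    by (intro nn_integral_mono pw)
  also have "\<dots> = (\<integral>\<^sup>+ t. (\<Sum>j. ennreal (a j) * indicator (U j) t) \<partial>\<eta>) + (\<integral>\<^sup>+ t. (\<Sum>j. ennreal (b j) * indicator (V j) t) \<partial>\<eta>)"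
    using mU mV by (intro nn_integral_add) auto
  also have "\<dots> = (\<Sum>j. ennreal (a j) * emeasure \<eta> (U j)) + (\<Sum>j. ennreal (b j) * emeasure \<eta> (V j))"
    using mU mV Um Vm by (simp add: nn_integral_suminf nn_integral_cmult_indicator)
  also have "\<dots> \<le> (\<Sum>j. ennreal (c1 * q1 ^ j)) + (\<Sum>j. ennreal (c2 * q2 ^ j))"
  proof (intro add_mono suminf_le)
    fix j
    have "emeasure \<eta> (U j) \<le> ennreal (E * (\<sigma> * 2 ^ (j + 1)) ^ k / P)"
      unfolding U_def using sig by (intro b1) simp
    then have "ennreal (a j) * emeasure \<eta> (U j) \<le> ennreal (a j) * ennreal (E * (\<sigma> * 2 ^ (j + 1)) ^ k / P)"
      by (rule mult_left_mono) simp
    also have "\<dots> = ennreal (a j * (E * (\<sigma> * 2 ^ (j + 1)) ^ k / P))" using a0 by (rule ennreal_mult'[symmetric])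
    also have "a j * (E * (\<sigma> * 2 ^ (j + 1)) ^ k / P) = c1 * q1 ^ j"
      unfolding a_def c1_def q1_def by (rule term1[OF sig])
    finally show "ennreal (a j) * emeasure \<eta> (U j) \<le> ennreal (c1 * q1 ^ j)" .
  next
    fix j
    have "emeasure \<eta> (V j) \<le> ennreal (E * (\<sigma> * 2 / 2 ^ j) ^ (k + 1) / (P * \<sigma>))"
      unfolding V_def using sig by (intro b2) simp
    then have "ennreal (b j) * emeasure \<eta> (V j) \<le> ennreal (b j) * ennreal (E * (\<sigma> * 2 / 2 ^ j) ^ (k + 1) / (P * \<sigma>))"
      by (rule mult_left_mono) simp
    also have "\<dots> = ennreal (b j * (E * (\<sigma> * 2 / 2 ^ j) ^ (k + 1) / (P * \<sigma>)))" using b0 by (rule ennreal_mult'[symmetric])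
    also have "b j * (E * (\<sigma> * 2 / 2 ^ j) ^ (k + 1) / (P * \<sigma>)) = c2 * q2 ^ j"
      unfolding b_def c2_def q2_def by (rule term2[OF sig])
    finally show "ennreal (b j) * emeasure \<eta> (V j) \<le> ennreal (c2 * q2 ^ j)" .
  qed auto
  also have "\<dots> = ennreal (c1 / (1 - q1)) + ennreal (c2 / (1 - q2))"
    using suminf_geom_ennreal[OF c1 q1] suminf_geom_ennreal[OF c2 q2] by simp
  also have "\<dots> = ennreal (c1 / (1 - q1) + c2 / (1 - q2))"
    using q1 q2 c1 c2 by (intro ennreal_plus[symmetric]) auto
  also have "c1 / (1 - q1) + c2 / (1 - q2) = Kc s k * E / (P * \<sigma> powr (s - real k))"
  proof -
    have n1: "1 - q1 \<noteq> 0" "1 - q2 \<noteq> 0" using q1 q2 by auto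
    have X: "\<sigma> powr (real k - s) = 1 / \<sigma> powr (s - real k)"
      using powr_minus_divide[of \<sigma> "s - real k"] by simp
    have "c1 / (1 - q1) + c2 / (1 - q2) = E * \<sigma> powr (real k - s) / P * (2 ^ k / (1 - q1) + 2 ^ (k + 1) * 2 powr s / (1 - q2))"
    proof -
      define F where "F = E * \<sigma> powr (real k - s) / P"
      have "c1 = F * 2 ^ k" "c2 = F * (2 ^ (k + 1) * 2 powr s)" unfolding c1_def c2_def F_def by simp_all
      then show ?thesis unfolding F_def[symmetric] by (simp add: distrib_left)
    qed
    also have "\<dots> = E * \<sigma> powr (real k - s) / P * Kc s k" unfolding Kc_def q1_def q2_def ..
    also have "\<dots> = Kc s k * E / (P * \<sigma> powr (s - real k))" unfolding X by (simp add: mult_ac)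
    finally show ?thesis .
  qed
  finally show ?thesis .
qed

lemma word_map_Nil [simp]: "word_map f t [] = id"
  unfolding word_map_def by simp

lemma word_map_Cons [simp]: "word_map f t (a # w) = f t a \<circ> word_map f t w"
  unfolding word_map_def by simp

lemma word_map_append: "word_map f t (w1 @ w2) = word_map f t w1 \<circ> word_map f t w2"
  by (induction w1) auto

lemma prefix_seq_add: "prefix_seq i (n + m) = prefix_seq i n @ map i [n..<n + m]"
proof -
  have "[0..<n + m] = [0..<n] @ [n..<n + m]" by (rule upt_add_eq_append) simp
  then show ?thesis unfolding prefix_seq_def by (simp only: map_append)
qed

context
  fixes f :: "'o::metric_space \<Rightarrow> 'a::finite \<Rightarrow> real^'n \<Rightarrow> real^'n"
    and Z U :: "(real^'n) set" and \<theta> :: real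
  assumes IFS: "param_C1_IFS f Z U \<theta>"
begin

lemma IFS_facts:
  "compact Z" "Z \<noteq> {}" "0 < \<theta>" "\<theta> < 1" "\<And>t i x. x \<in> Z \<Longrightarrow> f t i x \<in> Z"
  "\<And>t i x y. x \<in> Z \<Longrightarrow> y \<in> Z \<Longrightarrow> dist (f t i x) (f t i y) \<le> \<theta> * dist x y"
  "\<And>i x. x \<in> Z \<Longrightarrow> continuous_on UNIV (\<lambda>t. f t i x)"
  using IFS unfolding param_C1_IFS_def by (auto simp: image_subset_iff)

lemma wm_in: "x \<in> Z \<Longrightarrow> word_map f t w x \<in> Z"
  by (induction w) (auto intro: IFS_facts(5))

lemma wm_lip: "x \<in> Z \<Longrightarrow> y \<in> Z \<Longrightarrow> dist (word_map f t w x) (word_map f t w y) \<le> \<theta> ^ length w * dist x y"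
proof (induction w)
  case Nil then show ?case by simp
next
  case (Cons a w)
  have "dist (word_map f t (a # w) x) (word_map f t (a # w) y)
      \<le> \<theta> * dist (word_map f t w x) (word_map f t w y)"
    using Cons.prems by (simp add: IFS_facts(6) wm_in)
  also have "\<dots> \<le> \<theta> * (\<theta> ^ length w * dist x y)"
    using Cons IFS_facts(3) by (intro mult_left_mono) auto
  finally show ?case by simp
qed

lemma cont_step:
  assumes h: "continuous_on UNIV h" "\<And>t. h t \<in> Z"
  shows "continuous_on UNIV (\<lambda>t. f t a (h t))"
  unfolding continuous_on_iff
proof (intro ballI allI impI)
  fix t0 :: 'o and e :: real
  assume e: "0 < e"
  have "continuous_on UNIV (\<lambda>t. f t a (h t0))" using IFS_facts(7) h(2) by blast
  then obtain d1 where d1: "d1 > 0" "\<And>t. dist t t0 < d1 \<Longrightarrow> dist (f t a (h t0)) (f t0 a (h t0)) < e / 2"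
    unfolding continuous_on_iff using e by (metis UNIV_I half_gt_zero)
  obtain d2 where d2: "d2 > 0" "\<And>t. dist t t0 < d2 \<Longrightarrow> dist (h t) (h t0) < e / 2"
    using h(1) e unfolding continuous_on_iff by (metis UNIV_I half_gt_zero)
  show "\<exists>d>0. \<forall>t\<in>UNIV. dist t t0 < d \<longrightarrow> dist (f t a (h t)) (f t0 a (h t0)) < e"
  proof (intro exI[of _ "min d1 d2"] conjI ballI impI)
    show "0 < min d1 d2" using d1 d2 by simp
    fix t assume "dist t t0 < min d1 d2"
    then have t1: "dist t t0 < d1" and t2: "dist t t0 < d2" by auto
    have "dist (f t a (h t)) (f t a (h t0)) \<le> \<theta> * dist (h t) (h t0)"
      using h(2) by (rule IFS_facts(6)) (rule h(2))
    also have "\<dots> \<le> 1 * dist (h t) (h t0)" using IFS_facts(4) by (intro mult_right_mono) auto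
    finally have "dist (f t a (h t)) (f t a (h t0)) < e / 2" using d2(2)[OF t2] by linarith
    moreover have "dist (f t a (h t0)) (f t0 a (h t0)) < e / 2" using d1(2)[OF t1] .
    moreover have "dist (f t a (h t)) (f t0 a (h t0)) \<le> dist (f t a (h t)) (f t a (h t0)) + dist (f t a (h t0)) (f t0 a (h t0))"
      by (rule dist_triangle)
    ultimately show "dist (f t a (h t)) (f t0 a (h t0)) < e" by linarith
  qed
qed

lemma wm_cont: "x \<in> Z \<Longrightarrow> continuous_on UNIV (\<lambda>t. word_map f t w x)"
proof (induction w)
  case Nil then show ?case by simp
next
  case (Cons a w)
  then show ?case using cont_step[of "\<lambda>t. word_map f t w x" a] wm_in by simp
qed

lemma coding_cont: "continuous_on UNIV (\<lambda>t. coding f Z t i)"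
proof -
  define z0 where "z0 = (SOME z. z \<in> Z)"
  have z0: "z0 \<in> Z" unfolding z0_def using IFS_facts(2) by (simp add: some_in_eq)
  define g where "g n t = word_map f t (prefix_seq i n) z0" for n t
  define Dm where "Dm = diameter Z"
  have bZ: "bounded Z" using IFS_facts(1) by (rule compact_imp_bounded)
  have gZ: "g n t \<in> Z" for n t unfolding g_def using z0 by (rule wm_in)
  have Dm0: "0 \<le> Dm" unfolding Dm_def using z0 bZ diameter_bounded_bound[OF bZ z0 z0] by simp
  have gd: "dist (g n t) (g (n + m) t) \<le> \<theta> ^ n * Dm" for n m t
  proof -
    have "g (n + m) t = word_map f t (prefix_seq i n) (word_map f t (map i [n..<n + m]) z0)"
      unfolding g_def prefix_seq_add word_map_append by simp
    then have "dist (g n t) (g (n + m) t) \<le> \<theta> ^ length (prefix_seq i n) * dist z0 (word_map f t (map i [n..<n + m]) z0)"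
      unfolding g_def using z0 wm_in wm_lip by simp
    also have "\<dots> \<le> \<theta> ^ n * Dm"
    proof -
      have "dist z0 (word_map f t (map i [n..<n + m]) z0) \<le> Dm"
        unfolding Dm_def using z0 wm_in bZ by (intro diameter_bounded_bound) auto
      then show ?thesis using IFS_facts(3) by (simp add: prefix_seq_def mult_left_mono)
    qed
    finally show ?thesis .
  qed
  have th0: "0 \<le> \<theta>" using IFS_facts(3) by simp
  have small: "\<exists>N. \<theta> ^ N * Dm < e" if e0: "0 < e" for e
  proof -
    obtain N where "\<theta> ^ N < e / (Dm + 1)" using real_arch_pow_inv[of "e / (Dm + 1)" \<theta>] e0 Dm0 IFS_facts(4) by auto
    then have "\<theta> ^ N * (Dm + 1) < e" using Dm0 by (simp add: field_simps)
    moreover have "\<theta> ^ N * Dm \<le> \<theta> ^ N * (Dm + 1)" using th0 by (simp add: mult_left_mono)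
    ultimately show ?thesis by (intro exI[of _ N]) linarith
  qed
  have mono: "\<theta> ^ n * Dm \<le> \<theta> ^ N * Dm" if "N \<le> n" for n N
    using that th0 IFS_facts(4) Dm0 by (intro mult_right_mono power_decreasing) auto
  have conv: "(\<lambda>n. g n t) \<longlonglongrightarrow> coding f Z t i" for t
  proof -
    have "Cauchy (\<lambda>n. g n t)"
    proof (rule metric_CauchyI)
      fix e :: real assume "0 < e"
      then obtain N where N: "\<theta> ^ N * Dm < e" using small by blast
      show "\<exists>M. \<forall>m\<ge>M. \<forall>n\<ge>M. dist (g m t) (g n t) < e"
      proof (intro exI[of _ N] allI impI)
        fix m n assume mn: "N \<le> m" "N \<le> n"
        show "dist (g m t) (g n t) < e"
        proof (cases "m \<le> n")
          case True
          then have "dist (g m t) (g n t) \<le> \<theta> ^ m * Dm" using gd[where n=m and m="n - m" and t=t] by simp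
          then show ?thesis using mono[OF mn(1)] N by linarith
        next
          case False
          then have "dist (g n t) (g m t) \<le> \<theta> ^ n * Dm" using gd[where n=n and m="m - n" and t=t] by simp
          then show ?thesis using mono[OF mn(2)] N by (simp add: dist_commute)
        qed
      qed
    qed
    then have "convergent (\<lambda>n. g n t)" by (rule Cauchy_convergent)
    moreover have "coding f Z t i = lim (\<lambda>n. g n t)" unfolding coding_def g_def z0_def ..
    ultimately show ?thesis by (simp add: convergent_LIMSEQ_iff)
  qed
  have gG: "dist (g n t) (coding f Z t i) \<le> \<theta> ^ n * Dm" for n t
  proof -
    have l1: "(\<lambda>m. g (m + n) t) \<longlonglongrightarrow> coding f Z t i"
      by (rule LIMSEQ_ignore_initial_segment[OF conv])
    have "(\<lambda>m. g (n + m) t) = (\<lambda>m. g (m + n) t)" by (simp add: add.commute)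
    with l1 have "(\<lambda>m. g (n + m) t) \<longlonglongrightarrow> coding f Z t i" by simp
    then have "(\<lambda>m. dist (g n t) (g (n + m) t)) \<longlonglongrightarrow> dist (g n t) (coding f Z t i)"
      by (intro tendsto_dist tendsto_const)
    then show ?thesis by (rule LIMSEQ_le_const2) (use gd in auto)
  qed
  show ?thesis unfolding continuous_on_iff
  proof (intro ballI allI impI)
    fix t0 :: 'o and e :: real assume e: "0 < e"
    obtain n where n: "\<theta> ^ n * Dm < e / 3" using small[of "e/3"] e by auto
    have "continuous_on UNIV (g n)" unfolding g_def using z0 by (rule wm_cont)
    then obtain d where d: "d > 0" "\<And>t. dist t t0 < d \<Longrightarrow> dist (g n t) (g n t0) < e / 3"
      unfolding continuous_on_iff using e by (metis UNIV_I divide_pos_pos zero_less_numeral)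
    show "\<exists>d>0. \<forall>t\<in>UNIV. dist t t0 < d \<longrightarrow> dist (coding f Z t i) (coding f Z t0 i) < e"
    proof (intro exI[of _ d] conjI ballI impI)
      show "0 < d" by (rule d(1))
      fix t assume "dist t t0 < d"
      then have "dist (g n t) (g n t0) < e / 3" by (rule d(2))
      moreover have "dist (coding f Z t i) (g n t) \<le> \<theta> ^ n * Dm" using gG[of n t] by (simp add: dist_commute)
      moreover have "dist (g n t0) (coding f Z t0 i) \<le> \<theta> ^ n * Dm" by (rule gG)
      moreover have "dist (coding f Z t i) (coding f Z t0 i) \<le> dist (coding f Z t i) (g n t) + dist (g n t) (coding f Z t0 i)"
        by (rule dist_triangle)
      moreover have "dist (g n t) (coding f Z t0 i) \<le> dist (g n t) (g n t0) + dist (g n t0) (coding f Z t0 i)"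
        by (rule dist_triangle)
      ultimately show "dist (coding f Z t i) (coding f Z t0 i) < e"
        using n by linarith
    qed
  qed
qed

end

lemma Kc_pos: assumes "real k < s" "s < real k + 1" shows "0 < Kc s k"
proof -
  have "(2::real) powr (real k - s) < 1" using assms by (intro powr_less_one) auto
  moreover have "(2::real) powr (s - real k - 1) < 1" using assms by (intro powr_less_one) auto
  ultimately show ?thesis unfolding Kc_def by (intro add_pos_pos divide_pos_pos) auto
qed

theorem lemma3p2:
  fixes f :: "'o::metric_space \<Rightarrow> 'a::finite \<Rightarrow> real^'n \<Rightarrow> real^'n"
    and Z U :: "(real^'n) set" and \<theta> :: real
    and \<eta> :: "'o measure" and \<delta>0 :: real and \<psi> :: "real \<Rightarrow> real"
    and s :: real and t0 :: 'o and \<delta> :: real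
  assumes IFS: "param_C1_IFS f Z U \<theta>"
    and meas: "locally_finite_borel \<eta>"
    and gtc: "GTC f Z \<eta> \<delta>0 \<psi>"
    and s_pos: "0 < s" and s_lt: "s < real CARD('n)" and s_nonint: "s \<notin> \<int>"
    and delta: "0 < \<delta>" "\<delta> < \<delta>0"
  shows "\<exists>c>0. \<forall>i j :: nat \<Rightarrow> 'a. i \<noteq> j \<longrightarrow>
           (\<integral>\<^sup>+ t \<in> cball t0 \<delta>. inv_dist_pow s (coding f Z t i) (coding f Z t j) \<partial>\<eta>)
             \<le> ennreal (c * exp (real (common_len i j) * \<psi> \<delta>)
                  / (SUP x\<in>UNIV. svf s (Dmat f Z t0 (common_word i j) x)))"
proof -
  obtain C where C0: "C > 0" and CB: "\<And>i j r. i \<noteq> j \<Longrightarrow> 0 < r \<Longrightarrow>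
      emeasure \<eta> {t \<in> cball t0 \<delta>. dist (coding f Z t i) (coding f Z t j) < r}
        \<le> ennreal (C * exp (real (common_len i j) * \<psi> \<delta>) * Zfun f Z t0 (common_word i j) r)"
    using gtc delta unfolding GTC_def by fastforce
  define k where "k = nat \<lfloor>s\<rfloor>"
  have ks: "real k < s" "s < real k + 1" "k < CARD('n)"
    using svf_frac(2-4)[OF s_pos s_lt s_nonint] unfolding k_def by auto
  have svfs: "svf s A = (\<Prod>m\<in>{1..k}. sv A m) * sv A (k + 1) powr (s - real k)" for A :: "real^'n^'n"
    using svf_frac(1)[OF s_pos s_lt s_nonint] unfolding k_def by simp
  have setsB: "sets \<eta> = sets borel" using meas unfolding locally_finite_borel_def by simp
  define c where "c = Kc s k * C"
  have c0: "0 < c" unfolding c_def using Kc_pos[OF ks(1,2)] C0 by simp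
  show ?thesis
  proof (intro exI[of _ c] conjI allI impI c0)
    fix i j :: "nat \<Rightarrow> 'a" assume ij: "i \<noteq> j"
    define E where "E = C * exp (real (common_len i j) * \<psi> \<delta>)"
    define w where "w = common_word i j"
    define D where "D t = dist (coding f Z t i) (coding f Z t j)" for t
    define B where "B = cball t0 \<delta>"
    define I where "I = (\<integral>\<^sup>+ t \<in> B. (if D t = 0 then \<infinity> else ennreal (D t powr (-s))) \<partial>\<eta>)"
    have E0: "0 < E" unfolding E_def using C0 by simp
    have Ieq: "(\<integral>\<^sup>+ t \<in> cball t0 \<delta>. inv_dist_pow s (coding f Z t i) (coding f Z t j) \<partial>\<eta>) = I"
      unfolding I_def B_def D_def inv_dist_pow_def by simp
    have Dnn: "0 \<le> D t" for t unfolding D_def by simp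
    have Dc: "continuous_on UNIV D" unfolding D_def
      by (intro continuous_on_dist coding_cont[OF IFS])
    have msets: "{t \<in> B. D t < r} \<in> sets \<eta>" for r
    proof -
      have "{t \<in> B. D t < r} = B \<inter> {t. D t < r}" by auto
      moreover have "open {t. D t < r}" using Dc by (intro open_Collect_less continuous_on_const)
      moreover have "closed B" unfolding B_def by simp
      ultimately show ?thesis unfolding setsB by auto
    qed
    have Bnd: "emeasure \<eta> {t \<in> B. D t < r} \<le> ennreal (E * (r ^ m / svf (real m) (Dmat f Z t0 w x)))"
      if "0 < r" "m \<le> CARD('n)" for r m x
    proof -
      have "emeasure \<eta> {t \<in> B. D t < r} \<le> ennreal (E * Zfun f Z t0 w r)"
        using CB[OF ij that(1)] unfolding B_def D_def E_def w_def by simp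
      also have "\<dots> \<le> ennreal (E * (r ^ m / svf (real m) (Dmat f Z t0 w x)))"
        using E0 Zfun_le[OF that(2,1)] by (intro ennreal_leI mult_left_mono) auto
      finally show ?thesis .
    qed
    define S where "S x = svf s (Dmat f Z t0 w x)" for x
    have S0: "0 \<le> S x" for x unfolding S_def by (rule svf_frac_nonneg[OF s_pos s_lt s_nonint])
    show "(\<integral>\<^sup>+ t \<in> cball t0 \<delta>. inv_dist_pow s (coding f Z t i) (coding f Z t j) \<partial>\<eta>)
             \<le> ennreal (c * exp (real (common_len i j) * \<psi> \<delta>)
                  / (SUP x\<in>UNIV. svf s (Dmat f Z t0 (common_word i j) x)))"
    proof (cases "\<exists>x. S x = 0")
      case True
      then obtain x where x: "S x = 0" by blast
      define A where "A = Dmat f Z t0 w x"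
      have "(\<Prod>m\<in>{1..k}. sv A m) = 0 \<or> sv A (k + 1) = 0"
        using x unfolding S_def A_def[symmetric] svfs by auto
      then have z: "svf (real (k + 1)) A = 0" unfolding svf_int_succ[OF ks(3)] by auto
      have "I \<le> ennreal (Kc s k * 0 / (1 * 1 powr (s - real k)))"
        unfolding I_def
      proof (rule core[OF Dnn msets _ _ _ _ _ ks(1,2)])
        fix r :: real assume r: "0 < r"
        have "emeasure \<eta> {t \<in> B. D t < r} \<le> ennreal (E * (r ^ (k + 1) / svf (real (k + 1)) A))"
          unfolding A_def using Bnd[OF r, of "k + 1" x] ks(3) by simp
        then have e0: "emeasure \<eta> {t \<in> B. D t < r} = 0" using z by simp
        show "emeasure \<eta> {t \<in> B. D t < r} \<le> ennreal (0 * r ^ k / 1)" using e0 by simp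
        show "emeasure \<eta> {t \<in> B. D t < r} \<le> ennreal (0 * r ^ (k + 1) / (1 * 1))" using e0 by simp
      qed auto
      then have "I = 0" by simp
      then show ?thesis using Ieq by simp
    next
      case False
      then have Spos: "0 < S x" for x using S0[of x] by (metis order_le_neq_trans)
      have Ix: "I \<le> ennreal (Kc s k * E / S x)" for x
      proof -
        define A where "A = Dmat f Z t0 w x"
        define P where "P = (\<Prod>m\<in>{1..k}. sv A m)"
        define \<sigma> where "\<sigma> = sv A (k + 1)"
        have P0: "0 \<le> P" unfolding P_def using ks(3) by (intro prod_nonneg) (auto intro!: sv_nonneg)
        have sg0: "0 \<le> \<sigma>" unfolding \<sigma>_def using ks(3) by (intro sv_nonneg) auto
        have Seq: "S x = P * \<sigma> powr (s - real k)" unfolding S_def A_def[symmetric] svfs P_def \<sigma>_def ..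
        have "P \<noteq> 0" "\<sigma> \<noteq> 0" using Spos[of x] unfolding Seq by auto
        then have Pp: "0 < P" and sp: "0 < \<sigma>" using P0 sg0 by auto
        have svk: "svf (real k) A = P" unfolding P_def using ks(3) by (rule svf_int_lt)
        have svk1: "svf (real (k + 1)) A = P * \<sigma>" unfolding P_def \<sigma>_def by (rule svf_int_succ[OF ks(3)])
        have "I \<le> ennreal (Kc s k * E / (P * \<sigma> powr (s - real k)))"
          unfolding I_def
        proof (rule core[OF Dnn msets _ _ _ Pp sp ks(1,2)])
          fix r :: real assume r: "0 < r"
          show "emeasure \<eta> {t \<in> B. D t < r} \<le> ennreal (E * r ^ k / P)"
            using Bnd[OF r, of k x] ks(3) unfolding A_def[symmetric] svk by simp
          show "emeasure \<eta> {t \<in> B. D t < r} \<le> ennreal (E * r ^ (k + 1) / (P * \<sigma>))"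
            using Bnd[OF r, of "k + 1" x] ks(3) unfolding A_def[symmetric] svk1 by simp
        qed (use E0 in auto)
        then show ?thesis unfolding Seq .
      qed
      define K' where "K' = Kc s k * E"
      have K'eq: "c * exp (real (common_len i j) * \<psi> \<delta>) = K'" unfolding K'_def c_def E_def by simp
      have K'0: "0 < K'" unfolding K'_def using Kc_pos[OF ks(1,2)] E0 by simp
      have goal: "I \<le> ennreal (K' / (SUP x\<in>UNIV. S x))"
      proof (cases "I = 0")
        case True then show ?thesis by simp
      next
        case False
        have "I \<le> ennreal (K' / S undefined)" using Ix unfolding K'_def .
        then have "I < \<infinity>" using le_less_trans by fastforce
        then obtain r0 where r0: "I = ennreal r0" "0 \<le> r0" by (cases I) auto
        then have r0p: "0 < r0" using False by auto
        have Sb: "S x \<le> K' / r0" for x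
        proof -
          have "ennreal r0 \<le> ennreal (K' / S x)" using Ix[of x] r0 unfolding K'_def by simp
          then have "r0 \<le> K' / S x" using K'0 Spos[of x] by (simp add: ennreal_le_iff)
          then show ?thesis using r0p Spos[of x] by (simp add: field_simps)
        qed
        have bdd: "bdd_above (range S)" using Sb by (intro bdd_aboveI2) auto
        have SUPp: "0 < (SUP x\<in>UNIV. S x)"
          using Spos[of undefined] cSUP_upper[OF UNIV_I bdd, of undefined] by linarith
        have "(SUP x\<in>UNIV. S x) \<le> K' / r0" by (rule cSUP_least) (use Sb in auto)
        then have "r0 \<le> K' / (SUP x\<in>UNIV. S x)" using SUPp r0p by (simp add: field_simps)
        then show ?thesis using r0 by (simp add: ennreal_leI)
      qed
      show ?thesis unfolding Ieq K'eq using goal unfolding S_def w_def .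
    qed
  qed
qed

end
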